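(* Let $\Lambda$ be a 2-graph with $\Lambda^{\varepsilon_1}\sqcup\Lambda^{\varepsilon_2}$ finite. Then $(\Lambda^\infty,\sigma)$ is conjugate to the shift of finite type $(\mathsf X^+_{T_\Lambda},\sigma)$, via $x\mapsto(n\mapsto x(n,n+(1,1)))$.
   Context: 2-graph: countable category $\Lambda$ with functor $d:\Lambda\to\mathbb N^2$ with unique factorization; $\Lambda^m=d^{-1}(m)$; $\lambda(m,n)$ the unique factor of degree $n-m$ at position $[m,n]$ for $m\le n\le d(\lambda)$. $\Omega_2$ is the 2-graph with morphisms $\{(m,n)\in\mathbb N^2\times\mathbb N^2: m\le n\}$, composition $(l,m)(m,n)=(l,n)$, degree $d(m,n)=n-m$. $\Lambda^\infty$ is the set of degree-preserving functors $x:\Omega_2\to\Lambda$, with topology generated by $Z(\lambda)=\{y: y(0,d(\lambda))=\lambda\}$ and shifts $\sigma^p(x)(m,n)=x(m+p,n+p)$. $T_\Lambda=(p,q:F_\Lambda\to E_\Lambda)$: $E_\Lambda=(\Lambda^0,\Lambda^{\varepsilon_1},r,s)$; $F_\Lambda$ has vertices $\Lambda^{\varepsilon_2}$, edges $\Lambda^{\varepsilon_1+\varepsilon_2}$, $r(\lambda)=\lambda(0,\varepsilon_2)$, $s(\lambda)=\lambda(\varepsilon_1,\varepsilon_1+\varepsilon_2)$; $p(\lambda)=\lambda(\varepsilon_2,\varepsilon_1+\varepsilon_2)$, $q(\lambda)=\lambda(0,\varepsilon_1)$, and $p=s$, $q=r$ on $\Lambda^{\varepsilon_2}$. $\mathsf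 X^+_T=\{x:\mathbb N^2\to F^1: s(x_n)=r(x_{n+\varepsilon_1}),\ p(x_n)=q(x_{n+\varepsilon_2})\ \forall n\}$ with product topology and $(\sigma^mx)_n=x_{n+m}$. A conjugacy is a homeomorphism commuting with all shifts. *)

theory Defs
  imports "HOL-Analysis.Analysis" "HOL-Library.Product_Plus" "HOL-Library.Product_Order"
begin

text \<open>A (small) category presented in arrows-only form: objects are identified with
their identity morphisms; rng/src give range and source (as identity morphisms);
cmp a b is the composite a b, meaningful when src a = rng b. deg is the degree functor.\<close>

record 'a kgraph =
  Mor :: "'a set"
  rng :: "'a \<Rightarrow> 'a"
  src :: "'a \<Rightarrow> 'a"
  cmp :: "'a \<Rightarrow> 'a \<Rightarrow> 'a"
  deg :: "'a \<Rightarrow> nat \<times> nat"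

definition is_2graph :: "'a kgraph \<Rightarrow> bool" where
  "is_2graph L \<longleftrightarrow>
     countable (Mor L) \<and>
     (\<forall>a\<in>Mor L. rng L a \<in> Mor L \<and> src L a \<in> Mor L) \<and>
     (\<forall>a\<in>Mor L. rng L (rng L a) = rng L a \<and> src L (rng L a) = rng L a
                \<and> rng L (src L a) = src L a \<and> src L (src L a) = src L a) \<and>
     (\<forall>a\<in>Mor L. cmp L (rng L a) a = a \<and> cmp L a (src L a) = a) \<and>
     (\<forall>a\<in>Mor L. \<forall>b\<in>Mor L. src L a = rng L b \<longrightarrow>
         cmp L a b \<in> Mor L \<and> rng L (cmp L a b) = rng L a \<and> src L (cmp L a b) = src L b) \<and>
     (\<forall>a\<in>Mor L. \<forall>b\<in>Mor L. \<forall>c\<in>Mor L. src L a = rng L b \<longrightarrow> src L b = rng L c \<longrightarrow>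
         cmp L (cmp L a b) c = cmp L a (cmp L b c)) \<and>
     (\<forall>a\<in>Mor L. \<forall>b\<in>Mor L. src L a = rng L b \<longrightarrow> deg L (cmp L a b) = deg L a + deg L b) \<and>
     (\<forall>a\<in>Mor L. deg L (rng L a) = 0 \<and> deg L (src L a) = 0) \<and>
     (\<forall>a\<in>Mor L. \<forall>m n. deg L a = m + n \<longrightarrow>
         (\<exists>!(b, c). b \<in> Mor L \<and> c \<in> Mor L \<and> src L b = rng L c \<and>
                    deg L b = m \<and> deg L c = n \<and> a = cmp L b c))"

definition e1 :: "nat \<times> nat" where "e1 = (1, 0)"
definition e2 :: "nat \<times> nat" where "e2 = (0, 1)"

definition Lpow :: "'a kgraph \<Rightarrow> nat \<times> nat \<Rightarrow> 'a set" where
  "Lpow L m = {a \<in> Mor L. deg L a = m}"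

definition factor :: "'a kgraph \<Rightarrow> 'a \<Rightarrow> nat \<times> nat \<Rightarrow> nat \<times> nat \<Rightarrow> 'a" where
  "factor L a m n = (THE v. \<exists>u w. u \<in> Mor L \<and> v \<in> Mor L \<and> w \<in> Mor L \<and>
      src L u = rng L v \<and> src L v = rng L w \<and>
      deg L u = m \<and> deg L v = n - m \<and> deg L w = deg L a - n \<and>
      a = cmp L (cmp L u v) w)"

text \<open>Infinite path space: degree-preserving functors \<Omega>_2 \<rightarrow> \<Lambda>, represented as
functions on pairs (m,n), extensional (undefined) outside m \<le> n.\<close>
definition inf_paths :: "'a kgraph \<Rightarrow> (nat \<times> nat \<Rightarrow> nat \<times> nat \<Rightarrow> 'a) set" where
  "inf_paths L = {x.
     (\<forall>m n. \<not> m \<le> n \<longrightarrow> x m n = undefined) \<and>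
     (\<forall>m n. m \<le> n \<longrightarrow> x m n \<in> Mor L \<and> deg L (x m n) = n - m) \<and>
     (\<forall>m n. m \<le> n \<longrightarrow> rng L (x m n) = x m m \<and> src L (x m n) = x n n) \<and>
     (\<forall>l m n. l \<le> m \<longrightarrow> m \<le> n \<longrightarrow> x l n = cmp L (x l m) (x m n))}"

definition cyl :: "'a kgraph \<Rightarrow> 'a \<Rightarrow> (nat \<times> nat \<Rightarrow> nat \<times> nat \<Rightarrow> 'a) set" where
  "cyl L a = {y \<in> inf_paths L. y 0 (deg L a) = a}"

definition inf_path_topology :: "'a kgraph \<Rightarrow> (nat \<times> nat \<Rightarrow> nat \<times> nat \<Rightarrow> 'a) topology" where
  "inf_path_topology L = topology_generated_by (cyl L ` Mor L)"

definition path_shift :: "nat \<times> nat \<Rightarrow> (nat \<times> nat \<Rightarrow> nat \<times> nat \<Rightarrow> 'a) \<Rightarrow> (nat \<times> nat \<Rightarrow> nat \<times> nat \<Rightarrow> 'a)" where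
  "path_shift p x = (\<lambda>m n. if m \<le> n then x (m + p) (n + p) else undefined)"

definition TF_edges :: "'a kgraph \<Rightarrow> 'a set" where "TF_edges L = Lpow L (e1 + e2)"
definition TF_r :: "'a kgraph \<Rightarrow> 'a \<Rightarrow> 'a" where "TF_r L a = factor L a 0 e2"
definition TF_s :: "'a kgraph \<Rightarrow> 'a \<Rightarrow> 'a" where "TF_s L a = factor L a e1 (e1 + e2)"
definition TF_p :: "'a kgraph \<Rightarrow> 'a \<Rightarrow> 'a" where "TF_p L a = factor L a e2 (e1 + e2)"
definition TF_q :: "'a kgraph \<Rightarrow> 'a \<Rightarrow> 'a" where "TF_q L a = factor L a 0 e1"

definition XT :: "'a kgraph \<Rightarrow> (nat \<times> nat \<Rightarrow> 'a) set" where
  "XT L = {x. (\<forall>n. x n \<in> TF_edges L) \<and>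
              (\<forall>n. TF_s L (x n) = TF_r L (x (n + e1))) \<and>
              (\<forall>n. TF_p L (x n) = TF_q L (x (n + e2)))}"

definition XT_topology :: "'a kgraph \<Rightarrow> (nat \<times> nat \<Rightarrow> 'a) topology" where
  "XT_topology L = subtopology (product_topology (\<lambda>_. discrete_topology (TF_edges L)) UNIV) (XT L)"

definition XT_shift :: "nat \<times> nat \<Rightarrow> (nat \<times> nat \<Rightarrow> 'a) \<Rightarrow> (nat \<times> nat \<Rightarrow> 'a)" where
  "XT_shift m x = (\<lambda>n. x (n + m))"

end

theory Submission imports Defs begin

fun Dg :: "'a kgraph \<Rightarrow> (nat \<times> nat \<Rightarrow> 'a) \<Rightarrow> nat \<Rightarrow> 'a" where
  "Dg L y 0 = rng L (y (0, 0))"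
| "Dg L y (Suc k) = cmp L (Dg L y k) (y (k, k))"

definition Kof :: "nat \<times> nat \<Rightarrow> nat" where "Kof n = max (fst n) (snd n)"

definition psi :: "'a kgraph \<Rightarrow> (nat \<times> nat \<Rightarrow> 'a) \<Rightarrow> nat \<times> nat \<Rightarrow> nat \<times> nat \<Rightarrow> 'a" where
  "psi L y = (\<lambda>m n. if m \<le> n then factor L (Dg L y (Kof n)) m n else undefined)"

locale tg = fixes L :: "'a kgraph" assumes G: "is_2graph L"
begin

lemma GG: "countable (Mor L) \<and>
     (\<forall>a\<in>Mor L. rng L a \<in> Mor L \<and> src L a \<in> Mor L) \<and>
     (\<forall>a\<in>Mor L. rng L (rng L a) = rng L a \<and> src L (rng L a) = rng L a
                \<and> rng L (src L a) = src L a \<and> src L (src L a) = src L a) \<and>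
     (\<forall>a\<in>Mor L. cmp L (rng L a) a = a \<and> cmp L a (src L a) = a) \<and>
     (\<forall>a\<in>Mor L. \<forall>b\<in>Mor L. src L a = rng L b \<longrightarrow>
         cmp L a b \<in> Mor L \<and> rng L (cmp L a b) = rng L a \<and> src L (cmp L a b) = src L b) \<and>
     (\<forall>a\<in>Mor L. \<forall>b\<in>Mor L. \<forall>c\<in>Mor L. src L a = rng L b \<longrightarrow> src L b = rng L c \<longrightarrow>
         cmp L (cmp L a b) c = cmp L a (cmp L b c)) \<and>
     (\<forall>a\<in>Mor L. \<forall>b\<in>Mor L. src L a = rng L b \<longrightarrow> deg L (cmp L a b) = deg L a + deg L b) \<and>
     (\<forall>a\<in>Mor L. deg L (rng L a) = 0 \<and> deg L (src L a) = 0) \<and>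
     (\<forall>a\<in>Mor L. \<forall>m n. deg L a = m + n \<longrightarrow>
         (\<exists>!(b, c). b \<in> Mor L \<and> c \<in> Mor L \<and> src L b = rng L c \<and>
                    deg L b = m \<and> deg L c = n \<and> a = cmp L b c))"
  using G unfolding is_2graph_def .

lemma rs_mor: "a \<in> Mor L \<Longrightarrow> rng L a \<in> Mor L \<and> src L a \<in> Mor L"
  using GG by simp
lemma rs_idem: "a \<in> Mor L \<Longrightarrow> rng L (rng L a) = rng L a \<and> src L (rng L a) = rng L a
                \<and> rng L (src L a) = src L a \<and> src L (src L a) = src L a"
  using GG by simp
lemma unit: "a \<in> Mor L \<Longrightarrow> cmp L (rng L a) a = a \<and> cmp L a (src L a) = a"
  using GG by simp
lemma cmp_closed: "a \<in> Mor L \<Longrightarrow> b \<in> Mor L \<Longrightarrow> src L a = rng L b \<Longrightarrow>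
         cmp L a b \<in> Mor L \<and> rng L (cmp L a b) = rng L a \<and> src L (cmp L a b) = src L b"
  using GG by simp
lemma assoc: "a \<in> Mor L \<Longrightarrow> b \<in> Mor L \<Longrightarrow> c \<in> Mor L \<Longrightarrow> src L a = rng L b \<Longrightarrow> src L b = rng L c \<Longrightarrow>
         cmp L (cmp L a b) c = cmp L a (cmp L b c)"
  using GG by simp
lemma deg_cmp: "a \<in> Mor L \<Longrightarrow> b \<in> Mor L \<Longrightarrow> src L a = rng L b \<Longrightarrow> deg L (cmp L a b) = deg L a + deg L b"
  using GG by simp
lemma deg_rs: "a \<in> Mor L \<Longrightarrow> deg L (rng L a) = 0 \<and> deg L (src L a) = 0"
  using GG by simp
lemma ex1_fact: "a \<in> Mor L \<Longrightarrow> deg L a = m + n \<Longrightarrow> (\<exists>!(b, c). b \<in> Mor L \<and> c \<in> Mor L \<and> src L b = rng L c \<and>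
                    deg L b = m \<and> deg L c = n \<and> a = cmp L b c)"
  using GG[THEN conjunct2, THEN conjunct2, THEN conjunct2, THEN conjunct2, THEN conjunct2,
     THEN conjunct2, THEN conjunct2, THEN conjunct2, rule_format] by blast
lemma fact_exE: assumes "a \<in> Mor L" "deg L a = m + n"
  obtains b c where "b \<in> Mor L" "c \<in> Mor L" "src L b = rng L c"
                    "deg L b = m" "deg L c = n" "a = cmp L b c"
proof -
  from ex1_fact[OF assms] obtain p where "case p of (b, c) \<Rightarrow> b \<in> Mor L \<and> c \<in> Mor L \<and> src L b = rng L c \<and>
                    deg L b = m \<and> deg L c = n \<and> a = cmp L b c" by (elim ex1E) blast
  then show ?thesis using that by (cases p) (simp only: prod.case, elim conjE, blast)
qed

lemma fact_uniq:
  assumes a: "a \<in> Mor L" "deg L a = m + n"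
  and h: "b \<in> Mor L" "c \<in> Mor L" "src L b = rng L c" "deg L b = m" "deg L c = n" "a = cmp L b c"
       "b' \<in> Mor L" "c' \<in> Mor L" "src L b' = rng L c'" "deg L b' = m" "deg L c' = n" "a = cmp L b' c'"
  shows "b = b' \<and> c = c'"
proof -
  have "\<exists>!(b, c). b \<in> Mor L \<and> c \<in> Mor L \<and> src L b = rng L c \<and>
                    deg L b = m \<and> deg L c = n \<and> a = cmp L b c"
    using ex1_fact[OF a] .
  then obtain p where pu: "\<And>q. (case q of (b, c) \<Rightarrow> b \<in> Mor L \<and> c \<in> Mor L \<and> src L b = rng L c \<and>
                    deg L b = m \<and> deg L c = n \<and> a = cmp L b c) \<Longrightarrow> q = p"
      by (elim ex1E) blast
  have "(b, c) = p" by (rule pu) (use h in simp)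
  moreover have "(b', c') = p" by (rule pu) (use h in simp)
  ultimately show "b = b' \<and> c = c'" by (metis prod.inject)
qed

lemma pd: "(n::nat\<times>nat) \<le> d \<Longrightarrow> n + (d - n) = d"
  by (cases n; cases d) auto

definition dec where "dec a m n v \<longleftrightarrow> (\<exists>u w. u \<in> Mor L \<and> v \<in> Mor L \<and> w \<in> Mor L \<and>
      src L u = rng L v \<and> src L v = rng L w \<and>
      deg L u = m \<and> deg L v = n - m \<and> deg L w = deg L a - n \<and>
      a = cmp L (cmp L u v) w)"

lemma factor_dec: "factor L a m n = (THE v. dec a m n v)"
  unfolding factor_def dec_def by simp

lemma cmp_mor: "a \<in> Mor L \<Longrightarrow> b \<in> Mor L \<Longrightarrow> src L a = rng L b \<Longrightarrow> cmp L a b \<in> Mor L"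
  using cmp_closed by blast
lemma rng_cmp: "a \<in> Mor L \<Longrightarrow> b \<in> Mor L \<Longrightarrow> src L a = rng L b \<Longrightarrow> rng L (cmp L a b) = rng L a"
  using cmp_closed by blast
lemma src_cmp: "a \<in> Mor L \<Longrightarrow> b \<in> Mor L \<Longrightarrow> src L a = rng L b \<Longrightarrow> src L (cmp L a b) = src L b"
  using cmp_closed by blast

lemma decI: "u \<in> Mor L \<Longrightarrow> v \<in> Mor L \<Longrightarrow> w \<in> Mor L \<Longrightarrow>
      src L u = rng L v \<Longrightarrow> src L v = rng L w \<Longrightarrow>
      deg L u = m \<Longrightarrow> deg L v = n - m \<Longrightarrow> deg L w = deg L a - n \<Longrightarrow>
      a = cmp L (cmp L u v) w \<Longrightarrow> dec a m n v"
  unfolding dec_def by blast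

lemma decE: "dec a m n v \<Longrightarrow> (\<And>u w. u \<in> Mor L \<Longrightarrow> v \<in> Mor L \<Longrightarrow> w \<in> Mor L \<Longrightarrow>
      src L u = rng L v \<Longrightarrow> src L v = rng L w \<Longrightarrow>
      deg L u = m \<Longrightarrow> deg L v = n - m \<Longrightarrow> deg L w = deg L a - n \<Longrightarrow>
      a = cmp L (cmp L u v) w \<Longrightarrow> P) \<Longrightarrow> P"
  unfolding dec_def by blast

lemma dec_uniq:
  assumes A: "a \<in> Mor L" "m \<le> n" "n \<le> deg L a" and d: "dec a m n v" "dec a m n v'"
  shows "v = v'"
proof -
  obtain u w where 1: "u \<in> Mor L" "v \<in> Mor L" "w \<in> Mor L"
      "src L u = rng L v" "src L v = rng L w"
      "deg L u = m" "deg L v = n - m" "deg L w = deg L a - n"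
      "a = cmp L (cmp L u v) w" using d(1) by (rule decE)
  obtain u' w' where 2: "u' \<in> Mor L" "v' \<in> Mor L" "w' \<in> Mor L"
      "src L u' = rng L v'" "src L v' = rng L w'"
      "deg L u' = m" "deg L v' = n - m" "deg L w' = deg L a - n"
      "a = cmp L (cmp L u' v') w'" using d(2) by (rule decE)
  have c1: "cmp L u v \<in> Mor L" "src L (cmp L u v) = rng L w" "deg L (cmp L u v) = n"
    using cmp_mor[OF 1(1,2,4)] src_cmp[OF 1(1,2,4)] deg_cmp[OF 1(1,2,4)] 1(5,6,7) pd[OF A(2)] by auto
  have c2: "cmp L u' v' \<in> Mor L" "src L (cmp L u' v') = rng L w'" "deg L (cmp L u' v') = n"
    using cmp_mor[OF 2(1,2,4)] src_cmp[OF 2(1,2,4)] deg_cmp[OF 2(1,2,4)] 2(5,6,7) pd[OF A(2)] by auto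
  have "cmp L u v = cmp L u' v'"
    using fact_uniq[OF A(1) pd[OF A(3), symmetric] c1(1) 1(3) c1(2) c1(3) 1(8) 1(9) c2(1) 2(3) c2(2) c2(3) 2(8) 2(9)] by simp
  then show ?thesis
    using fact_uniq[OF c1(1) _ 1(1,2,4,6,7) refl 2(1,2,4,6,7)] pd[OF A(2)] c1(3) by simp
qed

lemma dec_ex:
  assumes A: "a \<in> Mor L" "m \<le> n" "n \<le> deg L a"
  shows "\<exists>v. dec a m n v"
proof -
  obtain b w where 1: "b \<in> Mor L" "w \<in> Mor L" "src L b = rng L w" "deg L b = n" "deg L w = deg L a - n" "a = cmp L b w"
    using fact_exE[OF A(1) pd[OF A(3), symmetric]] by metis
  have "deg L b = m + (n - m)" using 1(4) pd[OF A(2)] by simp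
  then obtain u v where 2: "u \<in> Mor L" "v \<in> Mor L" "src L u = rng L v" "deg L u = m" "deg L v = n - m" "b = cmp L u v"
    using fact_exE[OF 1(1)] by metis
  have "src L v = rng L w" using 1(3) src_cmp[OF 2(1,2,3)] 2(6) by simp
  then have "dec a m n v" using decI[OF 2(1,2) 1(2) 2(3) _ 2(4,5) 1(5)] 1(6) 2(6) by simp
  then show ?thesis ..
qed

lemma factor_eq:
  assumes "a \<in> Mor L" "m \<le> n" "n \<le> deg L a" "dec a m n v"
  shows "factor L a m n = v"
  unfolding factor_dec using dec_uniq[OF assms(1-3)] assms(4) by blast

lemma factor_dec':
  assumes "a \<in> Mor L" "m \<le> n" "n \<le> deg L a"
  shows "dec a m n (factor L a m n)"
  using dec_ex[OF assms] factor_eq[OF assms] by metis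


lemma decE': assumes "a \<in> Mor L" "m \<le> n" "n \<le> deg L a"
  obtains u w where "u \<in> Mor L" "factor L a m n \<in> Mor L" "w \<in> Mor L"
      "src L u = rng L (factor L a m n)" "src L (factor L a m n) = rng L w"
      "deg L u = m" "deg L (factor L a m n) = n - m" "deg L w = deg L a - n"
      "a = cmp L (cmp L u (factor L a m n)) w"
  using factor_dec'[OF assms] by (rule decE) blast

lemma pair_le_add: "(x::nat\<times>nat) \<le> x + y" by (simp add: less_eq_prod_def)
lemma pair_add_diff: "(x::nat\<times>nat) + y - x = y" by (simp add: prod_eq_iff)

lemma factor_cmp3:
  assumes "u \<in> Mor L" "v \<in> Mor L" "w \<in> Mor L" "src L u = rng L v" "src L v = rng L w"
    "a = cmp L (cmp L u v) w" "deg L u = m" "m + deg L v = n"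
  shows "factor L a m n = v"
proof -
  have uv: "cmp L u v \<in> Mor L" "src L (cmp L u v) = rng L w" "deg L (cmp L u v) = n"
    using cmp_mor[OF assms(1,2,4)] src_cmp[OF assms(1,2,4)] deg_cmp[OF assms(1,2,4)] assms by auto
  have a: "a \<in> Mor L" "deg L a = n + deg L w"
    using cmp_mor[OF uv(1) assms(3) uv(2)] deg_cmp[OF uv(1) assms(3) uv(2)] uv(3) assms(6) by auto
  show ?thesis
  proof (rule factor_eq[OF a(1)])
    show "m \<le> n" using assms(8) pair_le_add by metis
    show "n \<le> deg L a" using a(2) pair_le_add by metis
    show "dec a m n v"
      by (rule decI[OF assms(1-5) assms(7)]) (use assms(6,8) a(2) pair_add_diff in auto)
  qed
qed

lemmas cmp_simps = assoc cmp_mor rng_cmp src_cmp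

lemma factor_mor: "a \<in> Mor L \<Longrightarrow> m \<le> n \<Longrightarrow> n \<le> deg L a \<Longrightarrow> factor L a m n \<in> Mor L \<and> deg L (factor L a m n) = n - m"
  by (metis decE')

lemma factor_whole: assumes "a \<in> Mor L" shows "factor L a 0 (deg L a) = a"
  by (rule factor_cmp3[of "rng L a" a "src L a"]) (use assms rs_mor rs_idem unit deg_rs in auto)

lemma factor_sub:
  assumes a: "a \<in> Mor L" "m \<le> n" "n \<le> deg L a" and ij: "i \<le> j" "j \<le> n - m"
  shows "factor L (factor L a m n) i j = factor L a (m + i) (m + j)"
proof -
  let ?v = "factor L a m n"
  obtain u w where 1: "u \<in> Mor L" "?v \<in> Mor L" "w \<in> Mor L"
      "src L u = rng L ?v" "src L ?v = rng L w"
      "deg L u = m" "deg L ?v = n - m" "deg L w = deg L a - n"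
      "a = cmp L (cmp L u ?v) w" using decE'[OF a] by blast
  let ?v' = "factor L ?v i j"
  obtain u' w' where 2: "u' \<in> Mor L" "?v' \<in> Mor L" "w' \<in> Mor L"
      "src L u' = rng L ?v'" "src L ?v' = rng L w'"
      "deg L u' = i" "deg L ?v' = j - i" "deg L w' = deg L ?v - j"
      "?v = cmp L (cmp L u' ?v') w'" using decE'[OF 1(2) ij(1)] ij(2) 1(7) by metis
  have e: "a = cmp L (cmp L (cmp L u u') ?v') (cmp L w' w)"
    using 1 2 by (metis cmp_simps)
  show ?thesis
  proof (rule sym, rule factor_cmp3[OF _ 2(2) _ _ _ e])
    show "cmp L u u' \<in> Mor L" using 1 2 by (metis cmp_simps)
    show "cmp L w' w \<in> Mor L" using 1 2 by (metis cmp_simps)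
    show "src L (cmp L u u') = rng L ?v'" using 1 2 by (metis cmp_simps)
    show "src L ?v' = rng L (cmp L w' w)" using 1 2 by (metis cmp_simps)
    show "deg L (cmp L u u') = m + i" using 1 2 by (metis cmp_simps deg_cmp)
    show "m + i + deg L ?v' = m + j" using 2(7) ij(1) by (simp add: less_eq_prod_def prod_eq_iff)
  qed
qed


lemma factor_trans:
  assumes a: "a \<in> Mor L" "l \<le> m" "m \<le> n" "n \<le> deg L a"
  shows "factor L a l n = cmp L (factor L a l m) (factor L a m n) \<and> src L (factor L a l m) = rng L (factor L a m n)"
proof -
  have ln: "l \<le> n" using a(2,3) by (rule order_trans)
  let ?v = "factor L a l n"
  obtain u w where 1: "u \<in> Mor L" "?v \<in> Mor L" "w \<in> Mor L"
      "src L u = rng L ?v" "src L ?v = rng L w"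
      "deg L u = l" "deg L ?v = n - l" "deg L w = deg L a - n"
      "a = cmp L (cmp L u ?v) w" using decE'[OF a(1) ln a(4)] by blast
  have "deg L ?v = (m - l) + (n - m)" using 1(7) a(2,3) by (simp add: less_eq_prod_def prod_eq_iff)
  then obtain b c where 2: "b \<in> Mor L" "c \<in> Mor L" "src L b = rng L c"
                    "deg L b = m - l" "deg L c = n - m" "?v = cmp L b c"
    using fact_exE[OF 1(2)] by metis
  have e1: "a = cmp L (cmp L u b) (cmp L c w)" using 1 2 by (metis cmp_simps)
  have e2: "a = cmp L (cmp L (cmp L u b) c) w" using 1 2 by (metis cmp_simps)
  have fb: "factor L a l m = b"
  proof (rule factor_cmp3[OF 1(1) 2(1) _ _ _ e1 1(6)])
    show "cmp L c w \<in> Mor L" using 1 2 by (metis cmp_simps)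
    show "src L u = rng L b" using 1 2 by (metis cmp_simps)
    show "src L b = rng L (cmp L c w)" using 1 2 by (metis cmp_simps)
    show "l + deg L b = m" using 2(4) a(2) by (simp add: less_eq_prod_def prod_eq_iff)
  qed
  have fc: "factor L a m n = c"
  proof (rule factor_cmp3[OF _ 2(2) 1(3) _ _ e2])
    show "cmp L u b \<in> Mor L" using 1 2 by (metis cmp_simps)
    show "src L (cmp L u b) = rng L c" using 1 2 by (metis cmp_simps)
    show "src L c = rng L w" using 1 2 by (metis cmp_simps)
    have "deg L (cmp L u b) = l + (m - l)" using 1 2 by (metis cmp_simps deg_cmp)
    then show "deg L (cmp L u b) = m" using a(2) by (simp add: less_eq_prod_def prod_eq_iff)
    show "m + deg L c = n" using 2(5) a(3) by (simp add: less_eq_prod_def prod_eq_iff)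
  qed
  show ?thesis using fb fc 2 by simp
qed

lemma factor_rng_src:
  assumes a: "a \<in> Mor L" "m \<le> n" "n \<le> deg L a"
  shows "rng L (factor L a m n) = factor L a m m \<and> src L (factor L a m n) = factor L a n n"
proof -
  let ?v = "factor L a m n"
  obtain u w where 1: "u \<in> Mor L" "?v \<in> Mor L" "w \<in> Mor L"
      "src L u = rng L ?v" "src L ?v = rng L w"
      "deg L u = m" "deg L ?v = n - m" "deg L w = deg L a - n"
      "a = cmp L (cmp L u ?v) w" using decE'[OF a] by blast
  have r: "rng L ?v \<in> Mor L" "src L ?v \<in> Mor L" using rs_mor[OF 1(2)] by auto
  have e1: "a = cmp L (cmp L u (rng L ?v)) (cmp L ?v w)" using 1 r unit rs_idem by (metis cmp_simps)
  have e2: "a = cmp L (cmp L (cmp L u ?v) (src L ?v)) w" using 1 r unit rs_idem by (metis cmp_simps)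
  have "factor L a m m = rng L ?v"
    by (rule factor_cmp3[OF 1(1) r(1) _ _ _ e1 1(6)]) (use 1 r unit rs_idem deg_rs in \<open>(metis cmp_simps add_0_right)+\<close>)
  moreover have "factor L a n n = src L ?v"
  proof (rule factor_cmp3[OF _ r(2) 1(3) _ _ e2])
    show "cmp L u ?v \<in> Mor L" using 1 by (metis cmp_simps)
    show "src L (cmp L u ?v) = rng L (src L ?v)" using 1 r rs_idem by (metis cmp_simps)
    show "src L (src L ?v) = rng L w" using 1 r rs_idem by (metis cmp_simps)
    show "deg L (cmp L u ?v) = n" using 1 deg_cmp a(2) pd by metis
    show "n + deg L (src L ?v) = n" using deg_rs 1(2) by simp
  qed
  ultimately show ?thesis by simp
qed

lemma factor_prefix:
  assumes a: "a \<in> Mor L" "b \<in> Mor L" "src L a = rng L b" "m \<le> n" "n \<le> deg L a"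
  shows "factor L (cmp L a b) m n = factor L a m n"
proof -
  let ?v = "factor L a m n"
  obtain u w where 1: "u \<in> Mor L" "?v \<in> Mor L" "w \<in> Mor L"
      "src L u = rng L ?v" "src L ?v = rng L w"
      "deg L u = m" "deg L ?v = n - m" "deg L w = deg L a - n"
      "a = cmp L (cmp L u ?v) w" using decE'[OF a(1,4,5)] by blast
  have e: "cmp L a b = cmp L (cmp L u ?v) (cmp L w b)" using 1 a(2,3) by (metis cmp_simps)
  show ?thesis
  proof (rule factor_cmp3[OF 1(1,2) _ 1(4) _ e 1(6)])
    show "cmp L w b \<in> Mor L" using 1 a by (metis cmp_simps)
    show "src L ?v = rng L (cmp L w b)" using 1 a by (metis cmp_simps)
    show "m + deg L ?v = n" using 1(7) a(4) pd by metis
  qed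
qed

lemma factor_00: "a \<in> Mor L \<Longrightarrow> factor L a 0 0 = rng L a"
  using factor_rng_src[of a 0 "deg L a"] factor_whole by (simp add: less_eq_prod_def)
lemma factor_dd: "a \<in> Mor L \<Longrightarrow> factor L a (deg L a) (deg L a) = src L a"
  using factor_rng_src[of a 0 "deg L a"] factor_whole by (simp add: less_eq_prod_def)


lemma p_undef: "x \<in> inf_paths L \<Longrightarrow> \<not> m \<le> n \<Longrightarrow> x m n = undefined"
  unfolding inf_paths_def by blast
lemma p_mor: "x \<in> inf_paths L \<Longrightarrow> m \<le> n \<Longrightarrow> x m n \<in> Mor L \<and> deg L (x m n) = n - m"
  unfolding inf_paths_def by blast
lemma p_rs: "x \<in> inf_paths L \<Longrightarrow> m \<le> n \<Longrightarrow> rng L (x m n) = x m m \<and> src L (x m n) = x n n"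
  unfolding inf_paths_def by blast
lemma p_cmp: "x \<in> inf_paths L \<Longrightarrow> l \<le> m \<Longrightarrow> m \<le> n \<Longrightarrow> x l n = cmp L (x l m) (x m n)"
  unfolding inf_paths_def by blast

lemma path_factor:
  assumes x: "x \<in> inf_paths L" and h: "m \<le> N" "i \<le> j" "j \<le> N - m"
  shows "factor L (x m N) i j = x (m + i) (m + j)"
proof -
  have o: "m \<le> m + i" "m + i \<le> m + j" "m + j \<le> N" "m \<le> m + j"
    using h by (auto simp: less_eq_prod_def)
  have e: "x m N = cmp L (cmp L (x m (m + i)) (x (m + i) (m + j))) (x (m + j) N)"
    using p_cmp[OF x o(1) o(2)] p_cmp[OF x o(4) o(3)] by simp
  show ?thesis
  proof (rule factor_cmp3[OF _ _ _ _ _ e])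
    show "x m (m + i) \<in> Mor L" "x (m + i) (m + j) \<in> Mor L" "x (m + j) N \<in> Mor L"
      using p_mor[OF x] o by auto
    show "src L (x m (m + i)) = rng L (x (m + i) (m + j))" "src L (x (m + i) (m + j)) = rng L (x (m + j) N)"
      using p_rs[OF x] o by auto
    show "deg L (x m (m + i)) = i" using p_mor[OF x o(1)] by (simp add: prod_eq_iff)
    show "i + deg L (x (m + i) (m + j)) = j" using p_mor[OF x o(2)] h(2) by (simp add: prod_eq_iff less_eq_prod_def)
  qed
qed

lemma phi_XT: assumes x: "x \<in> inf_paths L" shows "(\<lambda>n. x n (n + (1, 1))) \<in> XT L"
proof -
  have le: "\<And>n. n \<le> n + (1::nat, 1::nat)" by (simp add: less_eq_prod_def)
  have E: "x n (n + (1, 1)) \<in> TF_edges L" for n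
    using p_mor[OF x le[of n]] unfolding TF_edges_def Lpow_def e1_def e2_def by (simp add: prod_eq_iff)
  have S: "TF_s L (x n (n + (1, 1))) = TF_r L (x (n + e1) (n + e1 + (1, 1)))" for n
  proof -
    have "TF_s L (x n (n + (1, 1))) = x (n + e1) (n + (e1 + e2))"
      unfolding TF_s_def by (rule path_factor[OF x le]) (auto simp: e1_def e2_def less_eq_prod_def)
    moreover have "TF_r L (x (n + e1) (n + e1 + (1, 1))) = x (n + e1 + 0) (n + e1 + e2)"
      unfolding TF_r_def by (rule path_factor[OF x le]) (auto simp: e1_def e2_def less_eq_prod_def)
    ultimately show ?thesis by (simp add: add.assoc)
  qed
  have P: "TF_p L (x n (n + (1, 1))) = TF_q L (x (n + e2) (n + e2 + (1, 1)))" for n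
  proof -
    have "TF_p L (x n (n + (1, 1))) = x (n + e2) (n + (e1 + e2))"
      unfolding TF_p_def by (rule path_factor[OF x le]) (auto simp: e1_def e2_def less_eq_prod_def)
    moreover have "TF_q L (x (n + e2) (n + e2 + (1, 1))) = x (n + e2 + 0) (n + e2 + e1)"
      unfolding TF_q_def by (rule path_factor[OF x le]) (auto simp: e1_def e2_def less_eq_prod_def)
    ultimately show ?thesis by (simp add: ac_simps)
  qed
  show ?thesis unfolding XT_def using E S P by (simp only: mem_Collect_eq) blast
qed


lemma XT_mor: "y \<in> XT L \<Longrightarrow> y n \<in> Mor L \<and> deg L (y n) = (1, 1)"
  unfolding XT_def TF_edges_def Lpow_def e1_def e2_def by (cases n) auto
lemma XT_s: "y \<in> XT L \<Longrightarrow> TF_s L (y (i, j)) = TF_r L (y (Suc i, j))"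
  unfolding XT_def e1_def by auto
lemma XT_p: "y \<in> XT L \<Longrightarrow> TF_p L (y (i, j)) = TF_q L (y (i, Suc j))"
  unfolding XT_def e2_def by auto

lemma e12: "e1 + e2 = (1, 1)" by (simp add: e1_def e2_def less_eq_prod_def)

lemma XT_vert: assumes y: "y \<in> XT L" shows "src L (y (i, j)) = rng L (y (Suc i, Suc j))"
proof -
  have m: "\<And>n. y n \<in> Mor L" "\<And>n. deg L (y n) = (1,1)" using XT_mor[OF y] by auto
  have le: "(0::nat\<times>nat) \<le> e1" "e1 \<le> (1,1)" "(0::nat\<times>nat) \<le> e2" "e2 \<le> (1,1)" "(0::nat\<times>nat) \<le> 0"
    by (auto simp: e1_def e2_def less_eq_prod_def)
  have "src L (y (i, j)) = factor L (y (i,j)) (1,1) (1,1)" using factor_dd[OF m(1)] m(2) by simp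
  also have "\<dots> = src L (TF_s L (y (i, j)))"
    unfolding TF_s_def e12 using factor_rng_src[OF m(1) le(2)] m(2) by simp
  also have "\<dots> = src L (TF_r L (y (Suc i, j)))" using XT_s[OF y] by simp
  also have "\<dots> = factor L (y (Suc i, j)) e2 e2"
    unfolding TF_r_def using factor_rng_src[OF m(1) le(3)] m(2) le(4) by simp
  also have "\<dots> = rng L (TF_p L (y (Suc i, j)))"
    unfolding TF_p_def e12 using factor_rng_src[OF m(1) le(4)] m(2) by simp
  also have "\<dots> = rng L (TF_q L (y (Suc i, Suc j)))" using XT_p[OF y] by simp
  also have "\<dots> = factor L (y (Suc i, Suc j)) 0 0"
    unfolding TF_q_def using factor_rng_src[OF m(1) le(1)] m(2) le(2) by simp
  also have "\<dots> = rng L (y (Suc i, Suc j))" using factor_00[OF m(1)] .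
  finally show ?thesis .
qed

lemma Dg_props: assumes y: "y \<in> XT L"
  shows "Dg L y k \<in> Mor L \<and> deg L (Dg L y k) = (k, k) \<and> src L (Dg L y k) = rng L (y (k, k))"
proof (induction k)
  case 0
  have "y (0,0) \<in> Mor L" using XT_mor[OF y] by blast
  then show ?case using rs_mor rs_idem deg_rs by (simp add: zero_prod_def)
next
  case (Suc k)
  have m: "y (k,k) \<in> Mor L" "deg L (y (k, k)) = (1,1)" using XT_mor[OF y] by auto
  show ?case using Suc cmp_closed[OF _ m(1)] deg_cmp[OF _ m(1)] m XT_vert[OF y] by simp
qed

lemma Dg_mono: assumes y: "y \<in> XT L" and K: "K \<le> K'" and mn: "m \<le> n" "n \<le> (K, K)"
  shows "factor L (Dg L y K') m n = factor L (Dg L y K) m n"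
  using K
proof (induction K' rule: dec_induct)
  case base
  then show ?case by simp
next
  case (step k)
  have "factor L (Dg L y (Suc k)) m n = factor L (Dg L y k) m n"
    unfolding Dg.simps
    by (rule factor_prefix) (use Dg_props[OF y, of k] XT_mor[OF y, of "(k,k)"] mn step(1,2) in \<open>auto simp: less_eq_prod_def\<close>)
  then show ?case using step(3) by simp
qed

lemma psi_eq: assumes y: "y \<in> XT L" and mn: "m \<le> n" "n \<le> (K, K)"
  shows "psi L y m n = factor L (Dg L y K) m n"
proof -
  have n: "n \<le> (Kof n, Kof n)" by (simp add: Kof_def less_eq_prod_def)
  have "psi L y m n = factor L (Dg L y (Kof n)) m n" unfolding psi_def by (simp only: if_P[OF mn(1)])
  also have "\<dots> = factor L (Dg L y (max K (Kof n))) m n" using Dg_mono[OF y max.cobounded2 mn(1) n] by simp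
  also have "\<dots> = factor L (Dg L y K) m n" using Dg_mono[OF y max.cobounded1 mn] by simp
  finally show ?thesis .
qed

lemma psi_path: assumes y: "y \<in> XT L" shows "psi L y \<in> inf_paths L"
proof -
  have D: "\<And>K. Dg L y K \<in> Mor L" "\<And>K. deg L (Dg L y K) = (K, K)" using Dg_props[OF y] by auto
  have n: "\<And>n. n \<le> (Kof n, Kof n)" by (simp add: Kof_def less_eq_prod_def)
  have A: "\<forall>m n. \<not> m \<le> n \<longrightarrow> psi L y m n = undefined" unfolding psi_def by simp
  have B: "\<forall>m n. m \<le> n \<longrightarrow> psi L y m n \<in> Mor L \<and> deg L (psi L y m n) = n - m"
    using psi_eq[OF y _ n] factor_mor[OF D(1)] D(2) n by metis
  have C: "\<forall>m n. m \<le> n \<longrightarrow> rng L (psi L y m n) = psi L y m m \<and> src L (psi L y m n) = psi L y n n"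
  proof (intro allI impI)
    fix m n :: "nat \<times> nat" assume mn: "m \<le> n"
    have mK: "m \<le> (Kof n, Kof n)" using mn n order_trans by blast
    show "rng L (psi L y m n) = psi L y m m \<and> src L (psi L y m n) = psi L y n n"
      using psi_eq[OF y mn n] psi_eq[OF y order_refl mK] psi_eq[OF y order_refl n]
        factor_rng_src[OF D(1) mn, of "Kof n"] n D(2) by metis
  qed
  have E: "\<forall>l m n. l \<le> m \<longrightarrow> m \<le> n \<longrightarrow> psi L y l n = cmp L (psi L y l m) (psi L y m n)"
  proof (intro allI impI)
    fix l m n :: "nat \<times> nat" assume lm: "l \<le> m" and mn: "m \<le> n"
    have mK: "m \<le> (Kof n, Kof n)" using mn n order_trans by blast
    show "psi L y l n = cmp L (psi L y l m) (psi L y m n)"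
      using psi_eq[OF y order_trans[OF lm mn] n] psi_eq[OF y lm mK] psi_eq[OF y mn n]
        factor_trans[OF D(1) lm mn, of "Kof n"] n D(2) by metis
  qed
  show ?thesis unfolding inf_paths_def using A B C E by blast
qed


lemma sq_edges:
  assumes a: "a \<in> Mor L" "deg L a = (K, K)" and ij: "Suc i \<le> K" "Suc j \<le> K"
  shows "TF_r L (factor L a (i, j) (Suc i, Suc j)) = factor L a (i, j) (i, Suc j)"
    "TF_p L (factor L a (i, j) (Suc i, Suc j)) = factor L a (i, Suc j) (Suc i, Suc j)"
    "TF_q L (factor L a (i, j) (Suc i, Suc j)) = factor L a (i, j) (Suc i, j)"
    "TF_s L (factor L a (i, j) (Suc i, Suc j)) = factor L a (Suc i, j) (Suc i, Suc j)"
proof -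
  have h: "(i, j) \<le> (Suc i, Suc j)" "(Suc i, Suc j) \<le> deg L a" using a ij by auto
  show "TF_r L (factor L a (i, j) (Suc i, Suc j)) = factor L a (i, j) (i, Suc j)"
    unfolding TF_r_def using factor_sub[OF a(1) h, of 0 e2] by (simp add: e2_def less_eq_prod_def)
  show "TF_p L (factor L a (i, j) (Suc i, Suc j)) = factor L a (i, Suc j) (Suc i, Suc j)"
    unfolding TF_p_def using factor_sub[OF a(1) h, of e2 "e1 + e2"] by (simp add: e1_def e2_def less_eq_prod_def)
  show "TF_q L (factor L a (i, j) (Suc i, Suc j)) = factor L a (i, j) (Suc i, j)"
    unfolding TF_q_def using factor_sub[OF a(1) h, of 0 e1] by (simp add: e1_def less_eq_prod_def)
  show "TF_s L (factor L a (i, j) (Suc i, Suc j)) = factor L a (Suc i, j) (Suc i, Suc j)"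
    unfolding TF_s_def using factor_sub[OF a(1) h, of e1 "e1 + e2"] by (simp add: e1_def e2_def less_eq_prod_def)
qed

lemma sq_det_rp:
  assumes "b \<in> Mor L" "deg L b = (1,1)" "c \<in> Mor L" "deg L c = (1,1)"
    "TF_r L b = TF_r L c" "TF_p L b = TF_p L c"
  shows "b = c"
proof -
  have le: "(0::nat\<times>nat) \<le> e2" "e2 \<le> (1,1)" by (auto simp: e2_def less_eq_prod_def)
  have "b = cmp L (TF_r L b) (TF_p L b)"
    using factor_trans[OF assms(1) le] factor_whole[OF assms(1)] assms(2)
    unfolding TF_r_def TF_p_def e12 by simp
  moreover have "c = cmp L (TF_r L c) (TF_p L c)"
    using factor_trans[OF assms(3) le] factor_whole[OF assms(3)] assms(4)
    unfolding TF_r_def TF_p_def e12 by simp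
  ultimately show ?thesis using assms(5,6) by simp
qed

lemma sq_det_qs:
  assumes "b \<in> Mor L" "deg L b = (1,1)" "c \<in> Mor L" "deg L c = (1,1)"
    "TF_q L b = TF_q L c" "TF_s L b = TF_s L c"
  shows "b = c"
proof -
  have le: "(0::nat\<times>nat) \<le> e1" "e1 \<le> (1,1)" by (auto simp: e1_def less_eq_prod_def)
  have "b = cmp L (TF_q L b) (TF_s L b)"
    using factor_trans[OF assms(1) le] factor_whole[OF assms(1)] assms(2)
    unfolding TF_q_def TF_s_def e12 by simp
  moreover have "c = cmp L (TF_q L c) (TF_s L c)"
    using factor_trans[OF assms(3) le] factor_whole[OF assms(3)] assms(4)
    unfolding TF_q_def TF_s_def e12 by simp
  ultimately show ?thesis using assms(5,6) by simp
qed

lemma Dg_diag: assumes y: "y \<in> XT L" and k: "Suc k \<le> K"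
  shows "factor L (Dg L y K) (k, k) (Suc k, Suc k) = y (k, k)"
proof -
  have "factor L (Dg L y K) (k, k) (Suc k, Suc k) = factor L (Dg L y (Suc k)) (k, k) (Suc k, Suc k)"
    by (rule Dg_mono[OF y k]) auto
  also have "\<dots> = y (k, k)"
  proof (rule factor_cmp3)
    show "Dg L y k \<in> Mor L" "y (k, k) \<in> Mor L" "src L (y (k, k)) \<in> Mor L"
      "src L (Dg L y k) = rng L (y (k, k))" "src L (y (k, k)) = rng L (src L (y (k, k)))"
      "deg L (Dg L y k) = (k, k)"
      using Dg_props[OF y, of k] XT_mor[OF y, of "(k,k)"] rs_mor rs_idem by auto
    show "Dg L y (Suc k) = cmp L (cmp L (Dg L y k) (y (k, k))) (src L (y (k, k)))"
    proof -
      have D: "Dg L y k \<in> Mor L" "y (k, k) \<in> Mor L" "src L (Dg L y k) = rng L (y (k, k))"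
        using Dg_props[OF y, of k] XT_mor[OF y, of "(k,k)"] by auto
      have "cmp L (cmp L (Dg L y k) (y (k, k))) (src L (cmp L (Dg L y k) (y (k, k)))) = cmp L (Dg L y k) (y (k, k))"
        using unit[OF cmp_mor[OF D]] by blast
      then show ?thesis using src_cmp[OF D] by simp
    qed
    show "(k, k) + deg L (y (k, k)) = (Suc k, Suc k)" using XT_mor[OF y, of "(k,k)"] by simp
  qed
  finally show ?thesis .
qed

lemma Dg_square: assumes y: "y \<in> XT L"
  shows "Suc i \<le> K \<Longrightarrow> Suc j \<le> K \<Longrightarrow> factor L (Dg L y K) (i, j) (Suc i, Suc j) = y (i, j)"
proof -
  let ?a = "Dg L y K"
  have a: "?a \<in> Mor L" "deg L ?a = (K, K)" using Dg_props[OF y] by auto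
  let ?S = "\<lambda>i j. factor L ?a (i, j) (Suc i, Suc j)"
  have Sm: "?S i j \<in> Mor L \<and> deg L (?S i j) = (1,1)" if "Suc i \<le> K" "Suc j \<le> K" for i j
    using factor_mor[OF a(1), of "(i,j)" "(Suc i, Suc j)"] a(2) that by auto
  have main: "\<forall>i j. Suc i \<le> K \<longrightarrow> Suc j \<le> K \<longrightarrow> (i - j) + (j - i) = d \<longrightarrow> ?S i j = y (i, j)" for d
  proof (induction d)
    case 0
    then show ?case using Dg_diag[OF y] by auto
  next
    case (Suc d)
    show ?case
    proof (intro allI impI)
      fix i j assume h: "Suc i \<le> K" "Suc j \<le> K" "(i - j) + (j - i) = Suc d"
      have yij: "y (i, j) \<in> Mor L \<and> deg L (y (i, j)) = (1,1)" using XT_mor[OF y] by blast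
      show "?S i j = y (i, j)"
      proof (cases "j < i")
        case True
        then obtain i' where i': "i = Suc i'" by (cases i) auto
        have I1: "?S i' j = y (i', j)" using Suc.IH h True i' by auto
        have I2: "?S i (Suc j) = y (i, Suc j)" using Suc.IH h True by auto
        have r: "TF_r L (?S i j) = TF_r L (y (i, j))"
          using sq_edges[OF a h(1,2)] sq_edges[OF a, of i' j] I1 XT_s[OF y, of i' j] h True i' by auto
        have p: "TF_p L (?S i j) = TF_p L (y (i, j))"
          using sq_edges[OF a h(1,2)] sq_edges[OF a, of i "Suc j"] I2 XT_p[OF y, of i j] h True by auto
        show ?thesis using sq_det_rp[OF _ _ _ _ r p] Sm[OF h(1,2)] yij by blast
      next
        case False
        then have ji: "i < j" using h(3) by auto
        then obtain j' where j': "j = Suc j'" by (cases j) auto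
        have I1: "?S i j' = y (i, j')" using Suc.IH h ji j' by auto
        have I2: "?S (Suc i) j = y (Suc i, j)" using Suc.IH h ji by auto
        have q: "TF_q L (?S i j) = TF_q L (y (i, j))"
          using sq_edges[OF a h(1,2)] sq_edges[OF a, of i j'] I1 XT_p[OF y, of i j'] h ji j' by auto
        have s: "TF_s L (?S i j) = TF_s L (y (i, j))"
          using sq_edges[OF a h(1,2)] sq_edges[OF a, of "Suc i" j] I2 XT_s[OF y, of i j] h ji by auto
        show ?thesis using sq_det_qs[OF _ _ _ _ q s] Sm[OF h(1,2)] yij by blast
      qed
    qed
  qed
  show "Suc i \<le> K \<Longrightarrow> Suc j \<le> K \<Longrightarrow> ?S i j = y (i, j)" using main by blast
qed

lemma phi_psi: assumes y: "y \<in> XT L" shows "(\<lambda>n. psi L y n (n + (1, 1))) = y"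
proof
  fix n :: "nat \<times> nat"
  obtain i j where n: "n = (i, j)" by (cases n)
  have "psi L y n (n + (1, 1)) = factor L (Dg L y (Suc (i + j))) (i, j) (Suc i, Suc j)"
    using psi_eq[OF y, of "(i,j)" "(Suc i, Suc j)" "Suc (i + j)"] n by simp
  also have "\<dots> = y n" using Dg_square[OF y, of i "Suc (i + j)" j] n by simp
  finally show "psi L y n (n + (1, 1)) = y n" .
qed

lemma Dg_phi: assumes x: "x \<in> inf_paths L" shows "Dg L (\<lambda>n. x n (n + (1, 1))) k = x 0 (k, k)"
proof (induction k)
  case 0
  have "(0::nat\<times>nat) \<le> (1,1)" by (simp add: less_eq_prod_def)
  then show ?case using p_rs[OF x] by (simp add: zero_prod_def)
next
  case (Suc k)
  have "x 0 (Suc k, Suc k) = cmp L (x 0 (k, k)) (x (k, k) (Suc k, Suc k))"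
    by (rule p_cmp[OF x]) (auto simp: zero_prod_def)
  then show ?case using Suc by simp
qed

lemma psi_phi: assumes x: "x \<in> inf_paths L" shows "psi L (\<lambda>n. x n (n + (1, 1))) = x"
proof (intro ext)
  fix m n :: "nat \<times> nat"
  show "psi L (\<lambda>n. x n (n + (1, 1))) m n = x m n"
  proof (cases "m \<le> n")
    case True
    have n: "n \<le> (Kof n, Kof n)" by (simp add: Kof_def less_eq_prod_def)
    have "psi L (\<lambda>n. x n (n + (1, 1))) m n = factor L (x 0 (Kof n, Kof n)) m n"
      using psi_eq[OF phi_XT[OF x] True n] Dg_phi[OF x] by simp
    also have "\<dots> = x (0 + m) (0 + n)"
      by (rule path_factor[OF x]) (use True n in \<open>auto simp: less_eq_prod_def\<close>)
    finally show ?thesis by simp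
  next
    case False
    then show ?thesis unfolding psi_def using p_undef[OF x False] by simp
  qed
qed


lemma top_inf: "topspace (inf_path_topology L) = inf_paths L"
proof -
  have "x \<in> cyl L (x 0 0)" if x: "x \<in> inf_paths L" for x
    using p_mor[OF x, of 0 0] x unfolding cyl_def by simp
  moreover have "x 0 0 \<in> Mor L" if x: "x \<in> inf_paths L" for x
    using p_mor[OF x, of 0 0] by simp
  ultimately show ?thesis unfolding inf_path_topology_def topology_generated_by_topspace cyl_def
    by blast
qed

lemma top_XT: "topspace (XT_topology L) = XT L"
  unfolding XT_topology_def by (auto simp: XT_def PiE_iff)

lemma Dg_cong: "(\<And>j. j \<le> k \<Longrightarrow> z (j, j) = y (j, j)) \<Longrightarrow> Dg L z k = Dg L y k"
  by (induction k) auto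

lemma phi_cont: "continuous_map (inf_path_topology L) (XT_topology L) (\<lambda>x n. x n (n + (1, 1)))"
  unfolding XT_topology_def
proof (rule continuous_map_into_subtopology)
  show "(\<lambda>x n. x n (n + (1, 1))) \<in> topspace (inf_path_topology L) \<rightarrow> XT L"
    using phi_XT top_inf by auto
  show "continuous_map (inf_path_topology L) (product_topology (\<lambda>_. discrete_topology (TF_edges L)) UNIV)
     (\<lambda>x n. x n (n + (1, 1)))"
    unfolding continuous_map_componentwise_UNIV
  proof
    fix k :: "nat \<times> nat"
    show "continuous_map (inf_path_topology L) (discrete_topology (TF_edges L)) (\<lambda>x. x k (k + (1, 1)))"
      unfolding continuous_map_def
    proof (intro conjI allI impI)
      show "(\<lambda>x. x k (k + (1, 1))) \<in> topspace (inf_path_topology L) \<rightarrow> topspace (discrete_topology (TF_edges L))"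
      proof
        fix x assume "x \<in> topspace (inf_path_topology L)"
        then have "(\<lambda>n. x n (n + (1, 1))) \<in> XT L" using phi_XT top_inf by auto
        then have "(\<lambda>n. x n (n + (1, 1))) k \<in> TF_edges L" unfolding XT_def by blast
        then show "x k (k + (1, 1)) \<in> topspace (discrete_topology (TF_edges L))" by simp
      qed
      fix U
      let ?C = "cyl L ` {a \<in> Mor L. deg L a = k + (1, 1) \<and> factor L a k (k + (1, 1)) \<in> U}"
      have le: "k \<le> k + (1::nat, 1::nat)" "(0::nat\<times>nat) \<le> k" by (auto simp: less_eq_prod_def)
      have eq: "{x \<in> topspace (inf_path_topology L). x k (k + (1, 1)) \<in> U} = \<Union>?C"
      proof (rule set_eqI, rule iffI)
        fix x assume "x \<in> {x \<in> topspace (inf_path_topology L). x k (k + (1, 1)) \<in> U}"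
        then have x: "x \<in> inf_paths L" and u: "x k (k + (1, 1)) \<in> U" using top_inf by auto
        have o: "0 \<le> k + (1::nat, 1::nat)" by (auto simp: less_eq_prod_def)
        have f: "factor L (x 0 (k + (1, 1))) k (k + (1, 1)) = x k (k + (1, 1))"
          using path_factor[OF x o le(1)] by simp
        have "x \<in> cyl L (x 0 (k + (1, 1)))" using x p_mor[OF x o] unfolding cyl_def by simp
        then show "x \<in> \<Union>?C" using p_mor[OF x o] f u by auto
      next
        fix x assume "x \<in> \<Union>?C"
        then obtain a where a: "a \<in> Mor L" "deg L a = k + (1, 1)" "factor L a k (k + (1, 1)) \<in> U"
          and x: "x \<in> inf_paths L" "x 0 (deg L a) = a" unfolding cyl_def by auto
        have o: "0 \<le> k + (1::nat, 1::nat)" by (auto simp: less_eq_prod_def)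
        have f: "factor L (x 0 (k + (1, 1))) k (k + (1, 1)) = x k (k + (1, 1))"
          using path_factor[OF x(1) o le(1)] by simp
        show "x \<in> {x \<in> topspace (inf_path_topology L). x k (k + (1, 1)) \<in> U}"
          using x a f top_inf by auto
      qed
      show "openin (inf_path_topology L) {x \<in> topspace (inf_path_topology L). x k (k + (1, 1)) \<in> U}"
        unfolding eq unfolding inf_path_topology_def
        by (rule openin_Union) (auto intro: topology_generated_by_Basis)
    qed
  qed
qed

lemma psi_cont: "continuous_map (XT_topology L) (inf_path_topology L) (psi L)"
  unfolding inf_path_topology_def continuous_on_generated_topo_iff
proof (intro conjI allI impI)
  show "psi L ` topspace (XT_topology L) \<subseteq> \<Union> (cyl L ` Mor L)"
    using psi_path top_inf unfolding inf_path_topology_def top_XT by auto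
  fix U assume "U \<in> cyl L ` Mor L"
  then obtain a where a: "a \<in> Mor L" "U = cyl L a" by auto
  let ?P = "product_topology (\<lambda>_. discrete_topology (TF_edges L)) (UNIV :: (nat \<times> nat) set)"
  let ?S = "psi L -` U \<inter> topspace (XT_topology L)"
  show "openin (XT_topology L) ?S"
  proof (subst openin_subopen, intro ballI)
    fix y assume "y \<in> ?S"
    then have y: "y \<in> XT L" "psi L y 0 (deg L a) = a" using a top_XT unfolding cyl_def by auto
    define K where "K = Kof (deg L a)"
    have dK: "deg L a \<le> (K, K)" "0 \<le> deg L a" by (auto simp: K_def Kof_def less_eq_prod_def)
    let ?T = "XT L \<inter> (\<Inter>k\<in>{..K}. {z \<in> topspace ?P. z (k, k) \<in> {y (k, k)}})"
    have "openin ?P (\<Inter>k\<in>{..K}. {z \<in> topspace ?P. z (k, k) \<in> {y (k, k)}})"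
    proof (rule openin_INT2)
      fix k assume "k \<in> {..K}"
      show "openin ?P {z \<in> topspace ?P. z (k, k) \<in> {y (k, k)}}"
        by (rule openin_continuous_map_preimage[OF continuous_map_product_projection])
          (use y(1) in \<open>auto simp: XT_def\<close>)
    qed auto
    then have "openin (XT_topology L) ?T" unfolding XT_topology_def by (rule openin_subtopology_Int2)
    moreover have "y \<in> ?T" using y(1) by (auto simp: XT_def PiE_iff)
    moreover have "?T \<subseteq> ?S"
    proof
      fix z assume z: "z \<in> ?T"
      then have zX: "z \<in> XT L" and agree: "\<And>k. k \<le> K \<Longrightarrow> z (k, k) = y (k, k)" by auto
      have "psi L z 0 (deg L a) = factor L (Dg L z K) 0 (deg L a)" using psi_eq[OF zX dK(2,1)] .
      also have "\<dots> = factor L (Dg L y K) 0 (deg L a)" using Dg_cong[of K z y] agree by simp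
      also have "\<dots> = psi L y 0 (deg L a)" using psi_eq[OF y(1) dK(2,1)] by simp
      finally have "psi L z 0 (deg L a) = a" using y(2) by simp
      then show "z \<in> ?S" using psi_path[OF zX] zX a top_XT unfolding cyl_def by auto
    qed
    ultimately show "\<exists>T. openin (XT_topology L) T \<and> y \<in> T \<and> T \<subseteq> ?S" by blast
  qed
qed

lemma main: "homeomorphic_map (inf_path_topology L) (XT_topology L) (\<lambda>x n. x n (n + (1, 1)))"
  unfolding homeomorphic_map_maps homeomorphic_maps_def
  using phi_cont psi_cont psi_phi phi_psi top_inf top_XT by metis

end

theorem lemma4p9:
  fixes L :: "'a kgraph"
  assumes "is_2graph L"
    and "finite (Lpow L e1 \<union> Lpow L e2)"
  shows "homeomorphic_map (inf_path_topology L) (XT_topology L) (\<lambda>x n. x n (n + (1, 1)))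
         \<and> (\<forall>p. \<forall>x\<in>inf_paths L.
               (\<lambda>n. path_shift p x n (n + (1, 1))) = XT_shift p (\<lambda>n. x n (n + (1, 1))))"
proof
  interpret tg L by (rule tg.intro) (rule assms(1))
  show "homeomorphic_map (inf_path_topology L) (XT_topology L) (\<lambda>x n. x n (n + (1, 1)))" by (rule main)
  show "\<forall>p. \<forall>x\<in>inf_paths L.
               (\<lambda>n. path_shift p x n (n + (1, 1))) = XT_shift p (\<lambda>n. x n (n + (1, 1)))"
    by (simp add: path_shift_def XT_shift_def less_eq_prod_def ac_simps)
qed

end
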